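(* Let $1\le k\le N/2$ and $v\in E_k$. If $k=1$ and $\alpha\ge(N-1)/(N-2)$, then $t(v)<1$ and $v$ is linearly unstable. If $\alpha<(N-1)/(N-2)$, then $v$ is linearly unstable.
   Context: Let $N\ge3$, $\alpha>1$, and $A_{i,j}=1-\delta_{i,j}$ for $i,j\le N$. Let $\Delta=\{v\in\mathbb R_+^N:\sum_iv_i=1,\ v_i\le3/4\ \forall i\}$. For $v$ with nonnegative coordinates let $v^\alpha=(v_i^\alpha)_i$, $H(v)=\sum_{i\neq j}v_i^\alpha v_j^\alpha$, $\pi_i(v)=v_i^\alpha(Av^\alpha)_i/H(v)$, and on $\Delta$ let $F(v)=-v+\pi(v)$. An equilibrium is $v\in\Delta$ with $F(v)=0$. For $1\le k\le N/2$, $E_k$ denotes the set of equilibria $v$ with all coordinates positive, different from the center $(1/N,\dots,1/N)$, and such that $v_1=\dots=v_k$ and $v_{k+1}=\dots=v_N$. For $v\in E_k$, $t(v)=v_N/v_1$. With $DF(v)$ the differential at $v$ of $v\mapsto-v+\pi(v)$ acting on $\{x:\sum_ix_i=0\}$, an equilibrium is linearly unstable if some eigenvalue of $DF(v)$ has positive real part. *)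

theory Defs
  imports "HOL-Analysis.Analysis"
begin

(* Vectors of R^N are represented as functions nat => real; coordinate i (1-based in
   the paper) is stored at index i-1, indices 0..N-1. Coordinates >= N are required
   to be 0 where membership in Delta is concerned. *)

definition Hfun :: "nat \<Rightarrow> real \<Rightarrow> (nat \<Rightarrow> real) \<Rightarrow> real" where
  "Hfun N \<alpha> v = (\<Sum>i<N. \<Sum>j<N. if i \<noteq> j then v i powr \<alpha> * v j powr \<alpha> else 0)"

(* (A v^alpha)_i with A_{ij} = 1 - delta_{ij} *)
definition Avpow :: "nat \<Rightarrow> real \<Rightarrow> (nat \<Rightarrow> real) \<Rightarrow> nat \<Rightarrow> real" where
  "Avpow N \<alpha> v i = (\<Sum>j<N. if j \<noteq> i then v j powr \<alpha> else 0)"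

definition pifun :: "nat \<Rightarrow> real \<Rightarrow> (nat \<Rightarrow> real) \<Rightarrow> nat \<Rightarrow> real" where
  "pifun N \<alpha> v i = v i powr \<alpha> * Avpow N \<alpha> v i / Hfun N \<alpha> v"

definition Delta :: "nat \<Rightarrow> (nat \<Rightarrow> real) set" where
  "Delta N = {v. (\<forall>i<N. 0 \<le> v i \<and> v i \<le> 3/4) \<and> (\<forall>i\<ge>N. v i = 0) \<and> (\<Sum>i<N. v i) = 1}"

definition Ffun :: "nat \<Rightarrow> real \<Rightarrow> (nat \<Rightarrow> real) \<Rightarrow> nat \<Rightarrow> real" where
  "Ffun N \<alpha> v i = - v i + pifun N \<alpha> v i"

definition equilibrium :: "nat \<Rightarrow> real \<Rightarrow> (nat \<Rightarrow> real) \<Rightarrow> bool" where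
  "equilibrium N \<alpha> v \<longleftrightarrow> v \<in> Delta N \<and> (\<forall>i<N. Ffun N \<alpha> v i = 0)"

definition center :: "nat \<Rightarrow> nat \<Rightarrow> real" where
  "center N = (\<lambda>i. if i < N then 1 / real N else 0)"

(* E_k: v_1 = ... = v_k (indices 0..k-1), v_{k+1} = ... = v_N (indices k..N-1) *)
definition Eset :: "nat \<Rightarrow> real \<Rightarrow> nat \<Rightarrow> (nat \<Rightarrow> real) set" where
  "Eset N \<alpha> k = {v. equilibrium N \<alpha> v \<and> (\<forall>i<N. 0 < v i) \<and> v \<noteq> center N
      \<and> (\<forall>i<k. v i = v 0) \<and> (\<forall>i. k \<le> i \<and> i < N \<longrightarrow> v i = v (N - 1))}"

definition tval :: "nat \<Rightarrow> (nat \<Rightarrow> real) \<Rightarrow> real" where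
  "tval N v = v (N - 1) / v 0"

definition DFmat :: "nat \<Rightarrow> real \<Rightarrow> (nat \<Rightarrow> real) \<Rightarrow> nat \<Rightarrow> nat \<Rightarrow> real" where
  "DFmat N \<alpha> v i j = (if i = j then -1 else 0)
     + deriv (\<lambda>s. pifun N \<alpha> (\<lambda>l. v l + (if l = j then s else 0)) i) 0"

definition linearly_unstable :: "nat \<Rightarrow> real \<Rightarrow> (nat \<Rightarrow> real) \<Rightarrow> bool" where
  "linearly_unstable N \<alpha> v \<longleftrightarrow>
     (\<exists>mu::complex. Re mu > 0 \<and>
        (\<exists>x::nat \<Rightarrow> complex. (\<forall>i\<ge>N. x i = 0) \<and> (\<exists>i<N. x i \<noteq> 0) \<and> (\<Sum>i<N. x i) = 0
           \<and> (\<forall>i<N. (\<Sum>j<N. complex_of_real (DFmat N \<alpha> v i j) * x j) = mu * x i)))"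

end

theory Submission
  imports Defs
begin


definition PS :: "nat \<Rightarrow> real \<Rightarrow> (nat \<Rightarrow> real) \<Rightarrow> real" where
  "PS N \<alpha> v = (\<Sum>l<N. v l powr \<alpha>)"
definition PQ :: "nat \<Rightarrow> real \<Rightarrow> (nat \<Rightarrow> real) \<Rightarrow> real" where
  "PQ N \<alpha> v = (\<Sum>l<N. (v l powr \<alpha>)^2)"

lemma sum_if_neq: "i < (N::nat) \<Longrightarrow> (\<Sum>l<N. if l \<noteq> i then f l else 0) = (\<Sum>l<N. f l) - (f i::real)"
proof -
  assume i: "i < N"
  have "(\<Sum>l<N. if l \<noteq> i then f l else 0) = (\<Sum>l<N. f l - (if l = i then f l else 0))"
    by (rule sum.cong) auto
  also have "\<dots> = (\<Sum>l<N. f l) - f i" using i by (simp add: sum_subtractf sum.delta)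
  finally show ?thesis .
qed

lemma Avpow_eq: "i < N \<Longrightarrow> Avpow N \<alpha> w i = PS N \<alpha> w - w i powr \<alpha>"
  unfolding Avpow_def PS_def by (subst sum_if_neq) (auto simp: eq_commute)

lemma Hfun_eq: "Hfun N \<alpha> w = (PS N \<alpha> w)^2 - PQ N \<alpha> w"
proof -
  have "Hfun N \<alpha> w = (\<Sum>i<N. w i powr \<alpha> * Avpow N \<alpha> w i)"
    unfolding Hfun_def Avpow_def by (rule sum.cong) (auto simp: sum_distrib_left intro!: sum.cong)
  also have "\<dots> = (\<Sum>i<N. w i powr \<alpha> * PS N \<alpha> w - (w i powr \<alpha>)^2)"
    by (rule sum.cong) (auto simp: Avpow_eq algebra_simps power2_eq_square)
  also have "\<dots> = (PS N \<alpha> w)^2 - PQ N \<alpha> w"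
    by (simp add: sum_subtractf PQ_def power2_eq_square sum_distrib_right[symmetric] PS_def)
  finally show ?thesis .
qed

lemma pifun_eq: "i < N \<Longrightarrow> pifun N \<alpha> w i = w i powr \<alpha> * (PS N \<alpha> w - w i powr \<alpha>) / ((PS N \<alpha> w)^2 - PQ N \<alpha> w)"
  unfolding pifun_def by (simp add: Avpow_eq Hfun_eq)

lemma sum_pert: "j < N \<Longrightarrow> (\<Sum>l<N. f ((v::nat\<Rightarrow>real) l + (if l = j then s else 0))) = (\<Sum>l<N. f (v l)) - f (v j) + (f (v j + s)::real)"
proof -
  assume j: "j < N"
  have "(\<Sum>l<N. f (v l + (if l = j then s else 0))) = (\<Sum>l<N. f (v l) + (if l = j then f (v j + s) - f (v j) else 0))"
    by (rule sum.cong) auto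
  also have "\<dots> = (\<Sum>l<N. f (v l)) - f (v j) + f (v j + s)" using j by (simp add: sum.distrib)
  finally show ?thesis .
qed

lemma PS_pert: "j < N \<Longrightarrow> PS N \<alpha> (\<lambda>l. v l + (if l = j then s else 0)) = PS N \<alpha> v - v j powr \<alpha> + (v j + s) powr \<alpha>"
  unfolding PS_def by (rule sum_pert[where f="\<lambda>x. x powr \<alpha>"])
lemma PQ_pert: "j < N \<Longrightarrow> PQ N \<alpha> (\<lambda>l. v l + (if l = j then s else 0)) = PQ N \<alpha> v - (v j powr \<alpha>)^2 + ((v j + s) powr \<alpha>)^2"
  unfolding PQ_def by (rule sum_pert[where f="\<lambda>x. (x powr \<alpha>)^2"])

lemma deriv_pi:
  assumes i: "i < N" and j: "j < N" and vj: "v j > 0"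
    and H: "(PS N \<alpha> v)^2 - PQ N \<alpha> v \<noteq> 0"
  shows "deriv (\<lambda>s. pifun N \<alpha> (\<lambda>l. v l + (if l = j then s else 0)) i) 0 =
    (\<alpha> * v j powr (\<alpha> - 1) / ((PS N \<alpha> v)^2 - PQ N \<alpha> v)) *
    ((if i = j then PS N \<alpha> v - 2 * v i powr \<alpha> else 0) + v i powr \<alpha>
      - 2 * pifun N \<alpha> v i * (PS N \<alpha> v - v j powr \<alpha>))"
proof -
  define S where "S = PS N \<alpha> v"
  define Q where "Q = PQ N \<alpha> v"
  define P where "P = v j powr \<alpha>"
  define g where "g = (\<lambda>s. (v j + s) powr \<alpha>)"
  have g: "(g has_real_derivative \<alpha> * v j powr (\<alpha> - 1)) (at 0)"
    unfolding g_def using vj by (auto intro!: derivative_eq_intros)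
  have g0: "g 0 = P" by (simp add: g_def P_def)
  have Hn: "S^2 - Q \<noteq> 0" using H by (simp add: S_def Q_def)
  have pv: "pifun N \<alpha> v i = v i powr \<alpha> * (S - v i powr \<alpha>) / (S^2 - Q)"
    using pifun_eq[OF i] by (simp add: S_def Q_def)
  show ?thesis
  proof (cases "i = j")
    case True
    have f: "(\<lambda>s. pifun N \<alpha> (\<lambda>l. v l + (if l = j then s else 0)) i) =
      (\<lambda>s. g s * (S - P + g s - g s) / ((S - P + g s)^2 - (Q - P^2 + (g s)^2)))"
      using True i j by (auto simp: pifun_eq PS_pert PQ_pert g_def S_def Q_def P_def)
    have "((\<lambda>s. g s * (S - P + g s - g s) / ((S - P + g s)^2 - (Q - P^2 + (g s)^2))) has_real_derivative
      (\<alpha> * v j powr (\<alpha> - 1) / (S^2 - Q)) * ((S - 2 * P) + P - 2 * (P * (S - P) / (S^2 - Q)) * (S - P))) (at 0)"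
      using Hn g0 by (auto intro!: derivative_eq_intros g simp: field_simps power2_eq_square)
    then show ?thesis unfolding f using True pv
      by (intro DERIV_imp_deriv) (simp add: S_def Q_def P_def)
  next
    case False
    define R where "R = v i powr \<alpha>"
    have f: "(\<lambda>s. pifun N \<alpha> (\<lambda>l. v l + (if l = j then s else 0)) i) =
      (\<lambda>s. R * (S - P + g s - R) / ((S - P + g s)^2 - (Q - P^2 + (g s)^2)))"
      using False i j by (auto simp: pifun_eq PS_pert PQ_pert g_def S_def Q_def P_def R_def)
    have "((\<lambda>s. R * (S - P + g s - R) / ((S - P + g s)^2 - (Q - P^2 + (g s)^2))) has_real_derivative
      (\<alpha> * v j powr (\<alpha> - 1) / (S^2 - Q)) * (R - 2 * (R * (S - R) / (S^2 - Q)) * (S - P))) (at 0)"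
      using Hn g0 by (auto intro!: derivative_eq_intros g simp: field_simps power2_eq_square)
    then show ?thesis unfolding f using False pv
      by (intro DERIV_imp_deriv) (simp add: S_def Q_def P_def R_def)
  qed
qed



lemma ln_gt_1m: "0 < x \<Longrightarrow> x \<noteq> 1 \<Longrightarrow> ln x > 1 - 1/x" for x::real
  using ln_diff_less[of 1 x] by (simp add: ln_div field_simps)
lemma ln_lt_m1: "0 < x \<Longrightarrow> x \<noteq> 1 \<Longrightarrow> ln x < x - 1" for x::real
  using ln_diff_less[of x 1] by simp

lemma claim1:
  fixes t \<alpha> k m x y :: real
  assumes t: "0 < t" "t < 1" and a: "\<alpha> > 1" and k: "k \<ge> 1" and m: "m \<ge> 1"
    and x: "x = t powr \<alpha>" and y: "y = t powr (\<alpha> - 1)"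
    and rel: "(k - 1) + m * x = y * (k + (m - 1) * x)"
  shows "\<alpha> * (k + (m - 2) * x) > k + (m - 1) * x"
proof -
  have x0: "x > 0" "x < 1" using t a x powr_less_mono2[of \<alpha> t 1] by auto
  have y0: "y > 0" using t y by simp
  have lx: "ln x = \<alpha> * ln t" using x t by (simp add: ln_powr)
  have ly: "ln y = (\<alpha> - 1) * ln t" using y t by (simp add: ln_powr)
  have L: "ln t < 0" using t by simp
  have pos: "k + (m - 1) * x > 0" using k m x0 by (smt (verit) mult_nonneg_nonneg)
  have e1: "(y - 1) * (k + (m - 1) * x) = x - 1" using rel by (simp add: algebra_simps)
  have e2: "ln y * (k + (m - 1) * x) \<le> x - 1"
    using ln_le_minus_one[OF y0] pos e1 by (metis mult_right_mono less_imp_le)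
  have e3: "x - 1 < x * ln x" using ln_gt_1m[of x] x0 by (simp add: field_simps)
  have "((\<alpha> - 1) * (k + (m - 1) * x)) * ln t < (\<alpha> * x) * ln t"
    using e2 e3 lx ly by (simp add: algebra_simps)
  hence "(\<alpha> - 1) * (k + (m - 1) * x) > \<alpha> * x" using L by (simp add: mult_less_cancel_right)
  thus ?thesis by (simp add: algebra_simps)
qed

lemma claim2:
  fixes t \<alpha> k m x y :: real
  assumes t: "1 < t" and a: "\<alpha> > 1" and k: "k \<ge> 1" and m: "m \<ge> 1"
    and x: "x = t powr \<alpha>" and y: "y = t powr (\<alpha> - 1)"
    and rel: "(k - 1) + m * x = y * (k + (m - 1) * x)"
  shows "\<alpha> * (k - 2 + m * x) > k - 1 + m * x"
proof -
  have x0: "x > 1" using t a x powr_less_mono2[of \<alpha> 1 t] by auto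
  have y0: "y > 0" using t y by simp
  have lx: "ln x = \<alpha> * ln t" using x t by (simp add: ln_powr)
  have ly: "ln y = (\<alpha> - 1) * ln t" using y t by (simp add: ln_powr)
  have L: "ln t > 0" using t by simp
  have pos: "k - 1 + m * x > 0" using k m x0 by (smt (verit) mult_less_cancel_left1)
  have e1: "(1 - 1/y) * (k - 1 + m * x) = x - 1" using rel y0 by (simp add: field_simps)
  have e2: "ln y * (k - 1 + m * x) \<ge> x - 1"
  proof -
    have "ln y \<ge> 1 - 1/y" using ln_gt_1m[OF y0] by (cases "y = 1") auto
    thus ?thesis using pos e1 by (metis mult_right_mono less_imp_le)
  qed
  have e3: "x - 1 > ln x" using ln_lt_m1[of x] x0 by simp
  have "((\<alpha> - 1) * (k - 1 + m * x)) * ln t > \<alpha> * ln t"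
    using e2 e3 lx ly by (simp add: algebra_simps)
  hence "(\<alpha> - 1) * (k - 1 + m * x) > \<alpha>" using L by (simp add: mult_less_cancel_right)
  thus ?thesis by (simp add: algebra_simps)
qed

lemma claim3:
  fixes t \<alpha> m x y :: real
  assumes t: "1 < t" and a: "\<alpha> > 1" and m: "m \<ge> 2"
    and x: "x = t powr \<alpha>" and y: "y = t powr (\<alpha> - 1)"
    and rel: "m * x = y * (1 + (m - 1) * x)"
  shows "(\<alpha> - 1) * (m - 1) * x > 1"
proof -
  have x0: "x > 1" using t a x powr_less_mono2[of \<alpha> 1 t] by auto
  have y0: "y > 0" using t y by simp
  have xy: "x = t * y" using x y t by (simp add: powr_diff)
  have mty: "m * t = 1 + (m - 1) * x"
  proof -
    have "y * (m * t) = y * (1 + (m - 1) * x)" using rel xy by (simp add: algebra_simps)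
    then show ?thesis using y0 by simp
  qed
  have ty: "t = (1 + (m - 1) * x) / m" using mty m by (simp add: eq_divide_eq mult.commute)
  have ly: "ln y = (\<alpha> - 1) * ln t" using y t by (simp add: ln_powr)
  have L: "ln t > 0" using t by simp
  define D where "D = 1 + (m - 1) * x"
  have mx0: "(m - 1) * x > 0" using m x0 by simp
  have D0: "D > 0" using mx0 by (simp add: D_def)
  have yD: "y * D = m * x" using rel by (simp add: D_def)
  have iy: "1 / y = D / (m * x)" using yD y0 D0 x0 m by (simp add: field_simps)
  have md: "m * x - D = x - 1" by (simp add: D_def algebra_simps)
  have e1a: "1 - D / (m * x) = (x - 1) / (m * x)" using md x0 m by (simp add: field_simps)
  have e1: "(1 - 1/y) * ((m - 1) * x) = (m - 1) * (x - 1) / m"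
    unfolding iy e1a using x0 m by (simp add: field_simps)
  have e2: "ln y * ((m - 1) * x) \<ge> (m - 1) * (x - 1) / m"
  proof -
    have "ln y \<ge> 1 - 1/y" using ln_gt_1m[OF y0] by (cases "y = 1") auto
    moreover have "(m - 1) * x \<ge> 0" using m x0 by simp
    ultimately show ?thesis using e1 by (metis mult_right_mono)
  qed
  have e3: "ln t < (m - 1) * (x - 1) / m"
  proof -
    have "ln t < t - 1" using ln_lt_m1[of t] t by simp
    moreover have "t - 1 = (m - 1) * (x - 1) / m" using mty m by (simp add: field_simps)
    ultimately show ?thesis by simp
  qed
  have "((\<alpha> - 1) * (m - 1) * x) * ln t > 1 * ln t"
    using e2 e3 ly by (simp add: algebra_simps)
  thus ?thesis using L by (simp add: mult_less_cancel_right)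
qed

lemma claim4:
  fixes t \<alpha> m x y :: real
  assumes t: "1 < t" and a: "\<alpha> \<ge> m / (m - 1)" and m: "m \<ge> 2"
    and x: "x = t powr \<alpha>" and y: "y = t powr (\<alpha> - 1)"
    and rel: "m * x = y * (1 + (m - 1) * x)"
  shows False
proof -
  have a1: "\<alpha> - 1 \<ge> 1 / (m - 1)" using a m by (simp add: field_simps)
  have a0: "\<alpha> - 1 > 0" using a1 m by (smt (verit) divide_pos_pos)
  have y0: "y > 0" using t y by simp
  have xy: "x = t * y" using x y t by (simp add: powr_diff)
  have ty: "m * t = 1 + (m - 1) * x"
  proof -
    have "y * (m * t) = y * (1 + (m - 1) * x)" using rel xy by (simp add: algebra_simps)
    then show ?thesis using y0 by simp
  qed
  have ly: "ln y = (\<alpha> - 1) * ln t" using y t by (simp add: ln_powr)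
  have lt: "ln t > (t - 1) / t" using ln_gt_1m[of t] t by (simp add: field_simps)
  have "y \<ge> 1 + ln y" using ln_le_minus_one[OF y0] by simp
  moreover have "ln y > (\<alpha> - 1) * ((t - 1) / t)" using mult_strict_left_mono[OF lt a0] ly by simp
  ultimately have "y > 1 + (\<alpha> - 1) * ((t - 1) / t)" by simp
  hence "t * y > t * (1 + (\<alpha> - 1) * ((t - 1) / t))" using t by (simp only: mult_strict_left_mono)
  moreover have "t * (1 + (\<alpha> - 1) * ((t - 1) / t)) = t + (\<alpha> - 1) * (t - 1)" using t by (simp add: field_simps)
  ultimately have "x > t + (\<alpha> - 1) * (t - 1)" using xy by simp
  moreover have "(\<alpha> - 1) * (t - 1) \<ge> (t - 1) / (m - 1)"
    using mult_right_mono[OF a1, of "t - 1"] t by simp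
  ultimately have "x > t + (t - 1) / (m - 1)" by simp
  hence "(m - 1) * x > (m - 1) * t + (t - 1)" using m by (simp add: field_simps)
  thus False using ty by (simp add: algebra_simps)
qed


lemma eq_H:
  assumes eq: "\<forall>i<N. pifun N \<alpha> v i = v i" and pos: "\<forall>i<N. v i > 0" and l: "l < N"
  shows "(PS N \<alpha> v)^2 - PQ N \<alpha> v = v l powr (\<alpha> - 1) * (PS N \<alpha> v - v l powr \<alpha>)"
    and "(PS N \<alpha> v)^2 - PQ N \<alpha> v \<noteq> 0"
proof -
  define H where "H = (PS N \<alpha> v)^2 - PQ N \<alpha> v"
  have vl: "v l > 0" using pos l by auto
  have e: "v l powr \<alpha> * (PS N \<alpha> v - v l powr \<alpha>) / H = v l"
    using eq l pifun_eq[OF l, of \<alpha> v] by (simp add: H_def)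
  show Hn: "(PS N \<alpha> v)^2 - PQ N \<alpha> v \<noteq> 0"
  proof
    assume "(PS N \<alpha> v)^2 - PQ N \<alpha> v = 0"
    then have "H = 0" by (simp add: H_def)
    then show False using e vl by simp
  qed
  have P: "v l powr \<alpha> = v l * v l powr (\<alpha> - 1)"
    using vl by (simp add: powr_mult_base)
  have "v l * v l powr (\<alpha> - 1) * (PS N \<alpha> v - v l powr \<alpha>) = v l * H"
    using e Hn P by (simp add: H_def field_simps)
  then show "(PS N \<alpha> v)^2 - PQ N \<alpha> v = v l powr (\<alpha> - 1) * (PS N \<alpha> v - v l powr \<alpha>)"
    using vl by (simp add: H_def)
qed

lemma DF_eq:
  assumes eq: "\<forall>i<N. pifun N \<alpha> v i = v i" and pos: "\<forall>i<N. v i > 0" and i: "i < N" and j: "j < N"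
  shows "DFmat N \<alpha> v i j =
    (if i = j then -1 + \<alpha> / (PS N \<alpha> v - v i powr \<alpha>) * (PS N \<alpha> v - 2 * v i powr \<alpha>) else 0)
    + \<alpha> / (PS N \<alpha> v - v j powr \<alpha>) * v i powr \<alpha> - 2 * \<alpha> * v i"
proof -
  define S where "S = PS N \<alpha> v"
  have Hj: "(PS N \<alpha> v)^2 - PQ N \<alpha> v = v j powr (\<alpha> - 1) * (S - v j powr \<alpha>)"
    and Hn: "(PS N \<alpha> v)^2 - PQ N \<alpha> v \<noteq> 0" using eq_H[OF eq pos j] by (auto simp: S_def)
  have vj: "v j > 0" using pos j by auto
  have c: "\<alpha> * v j powr (\<alpha> - 1) / ((PS N \<alpha> v)^2 - PQ N \<alpha> v) = \<alpha> / (S - v j powr \<alpha>)"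
    using Hj vj by simp
  have Sj: "S - v j powr \<alpha> \<noteq> 0" using Hj Hn by auto
  show ?thesis
    unfolding DFmat_def deriv_pi[OF i j vj Hn] c using eq i Sj
    by (auto simp: S_def[symmetric] field_simps)
qed

lemma sum_if_mult: "(i::nat) < N \<Longrightarrow> (\<Sum>j<N. (if i = j then A else 0) * (x j::real)) = A * x i"
proof -
  assume "i < N"
  have "(\<Sum>j<N. (if i = j then A else 0) * x j) = (\<Sum>j<N. if i = j then A * x j else 0)"
    by (rule sum.cong) auto
  then show ?thesis using \<open>i < N\<close> by simp
qed

lemma DF_mult:
  assumes eq: "\<forall>i<N. pifun N \<alpha> v i = v i" and pos: "\<forall>i<N. v i > 0" and i: "i < N"
  shows "(\<Sum>j<N. DFmat N \<alpha> v i j * x j) =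
    (-1 + \<alpha> / (PS N \<alpha> v - v i powr \<alpha>) * (PS N \<alpha> v - 2 * v i powr \<alpha>)) * x i
    + v i powr \<alpha> * (\<Sum>j<N. \<alpha> / (PS N \<alpha> v - v j powr \<alpha>) * x j) - 2 * \<alpha> * v i * (\<Sum>j<N. x j)"
    (is "_ = ?rhs")
proof -
  have "(\<Sum>j<N. DFmat N \<alpha> v i j * x j) = (\<Sum>j<N.
    (if i = j then -1 + \<alpha> / (PS N \<alpha> v - v i powr \<alpha>) * (PS N \<alpha> v - 2 * v i powr \<alpha>) else 0) * x j
    + v i powr \<alpha> * (\<alpha> / (PS N \<alpha> v - v j powr \<alpha>) * x j) - 2 * \<alpha> * v i * x j)"
    by (rule sum.cong) (auto simp: DF_eq[OF eq pos i] algebra_simps)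
  also have "\<dots> = ?rhs"
    by (simp add: sum.distrib sum_subtractf sum_if_mult[OF i] sum_distrib_left)
  finally show ?thesis .
qed

lemma unstable_of_real:
  assumes "\<forall>i\<ge>N. x i = 0" "r < N" "x r \<noteq> 0" "(\<Sum>i<N. x i) = 0"
    "\<forall>i<N. (\<Sum>j<N. DFmat N \<alpha> v i j * x j) = \<mu> * x i" "\<mu> > 0"
  shows "linearly_unstable N \<alpha> v"
proof -
  define z where "z = (\<lambda>i. complex_of_real (x i))"
  have 1: "Re (complex_of_real \<mu>) > 0" using assms by simp
  have 2: "\<forall>i\<ge>N. z i = 0" using assms by (simp add: z_def)
  have 3: "\<exists>i<N. z i \<noteq> 0" using assms by (auto simp: z_def)
  have 4: "(\<Sum>i<N. z i) = 0" using assms(4) by (simp add: z_def flip: of_real_sum)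
  have 5: "\<forall>i<N. (\<Sum>j<N. complex_of_real (DFmat N \<alpha> v i j) * z j) = complex_of_real \<mu> * z i"
    using assms(5) by (simp add: z_def flip: of_real_sum of_real_mult)
  show ?thesis unfolding linearly_unstable_def using 1 2 3 4 5 by blast
qed

lemma diff_unstable:
  assumes eq: "\<forall>i<N. pifun N \<alpha> v i = v i" and pos: "\<forall>i<N. v i > 0"
    and p: "p < N" and q: "q < N" and pq: "p \<noteq> q" and vpq: "v p = v q"
    and D: "PS N \<alpha> v - v p powr \<alpha> > 0"
    and C: "\<alpha> * (PS N \<alpha> v - 2 * v p powr \<alpha>) > PS N \<alpha> v - v p powr \<alpha>"
  shows "linearly_unstable N \<alpha> v"
proof -
  define x where "x = (\<lambda>l. (if l = p then 1 else 0) - (if l = q then 1 else (0::real)))"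
  define \<mu> where "\<mu> = -1 + \<alpha> / (PS N \<alpha> v - v p powr \<alpha>) * (PS N \<alpha> v - 2 * v p powr \<alpha>)"
  have sx: "(\<Sum>l<N. f l * x l) = f p - f q" for f
  proof -
    have "(\<Sum>l<N. f l * x l) = (\<Sum>l<N. (if l = p then f l else 0) - (if l = q then f l else 0))"
      by (rule sum.cong) (auto simp: x_def)
    then show ?thesis using p q by (simp add: sum_subtractf)
  qed
  have s0: "(\<Sum>l<N. x l) = 0" using sx[of "\<lambda>_. 1"] by simp
  have s1: "(\<Sum>j<N. \<alpha> / (PS N \<alpha> v - v j powr \<alpha>) * x j) = 0"
    using sx[of "\<lambda>j. \<alpha> / (PS N \<alpha> v - v j powr \<alpha>)"] vpq by simp
  show ?thesis
  proof (rule unstable_of_real[where x = x and r = p and \<mu> = \<mu>])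
    show "\<forall>i\<ge>N. x i = 0" using p q by (auto simp: x_def)
    show "p < N" by fact
    show "x p \<noteq> 0" using pq by (simp add: x_def)
    show "(\<Sum>i<N. x i) = 0" by fact
    show "\<forall>i<N. (\<Sum>j<N. DFmat N \<alpha> v i j * x j) = \<mu> * x i"
      using s0 s1 vpq pq by (auto simp: DF_mult[OF eq pos] \<mu>_def x_def)
    show "\<mu> > 0" using C D by (simp add: \<mu>_def field_simps)
  qed
qed



lemma aux_split: "S - P \<noteq> 0 \<Longrightarrow> (c::real) / (S - P) * (S - 2 * P) = c - P * (c / (S - P))"
proof -
  assume h: "S - P \<noteq> 0"
  have "c / (S - P) * (S - 2 * P) = c / (S - P) * ((S - P) - P)" by simp
  also have "\<dots> = c / (S - P) * (S - P) - c / (S - P) * P" by (rule right_diff_distrib)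
  also have "\<dots> = c - P * (c / (S - P))" using h by simp
  finally show ?thesis .
qed

theorem lemma4p5:
  fixes N k :: nat and \<alpha> :: real and v :: "nat \<Rightarrow> real"
  assumes "N \<ge> 3" and "\<alpha> > 1"
    and "1 \<le> k" and "2 * k \<le> N"
    and "v \<in> Eset N \<alpha> k"
  shows "(k = 1 \<and> \<alpha> \<ge> (real N - 1) / (real N - 2) \<longrightarrow>
            tval N v < 1 \<and> linearly_unstable N \<alpha> v)
       \<and> (\<alpha> < (real N - 1) / (real N - 2) \<longrightarrow> linearly_unstable N \<alpha> v)"
proof -
  note N3 = assms(1) and a1 = assms(2) and k1 = assms(3) and k2 = assms(4)
  have eqm: "equilibrium N \<alpha> v" and pos: "\<forall>i<N. 0 < v i" and nc: "v \<noteq> center N"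
    and hA: "\<forall>i<k. v i = v 0" and hB: "\<forall>i. k \<le> i \<and> i < N \<longrightarrow> v i = v (N - 1)"
    using assms(5) unfolding Eset_def mem_Collect_eq by blast+
  have vD: "v \<in> Delta N" and F0: "\<forall>i<N. Ffun N \<alpha> v i = 0" using eqm by (auto simp: equilibrium_def)
  have zero: "\<forall>i\<ge>N. v i = 0" and sum1: "(\<Sum>i<N. v i) = 1" using vD by (auto simp: Delta_def)
  have eq: "\<forall>i<N. pifun N \<alpha> v i = v i" using F0 by (auto simp: Ffun_def)
  define a where "a = v 0"
  define b where "b = v (N - 1)"
  have a0: "a > 0" using pos N3 by (auto simp: a_def)
  have b0: "b > 0" using pos N3 by (auto simp: b_def)
  have vA: "\<And>i. i < k \<Longrightarrow> v i = a" unfolding a_def using hA by blast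
  have vB: "\<And>i. k \<le> i \<Longrightarrow> i < N \<Longrightarrow> v i = b" unfolding b_def using hB by blast
  have ab: "a \<noteq> b"
  proof
    assume ab: "a = b"
    have all: "\<forall>i<N. v i = a"
    proof (intro allI impI)
      fix i assume "i < N" then show "v i = a" using vA[of i] vB[of i] ab by (cases "i < k") auto
    qed
    have "(\<Sum>i<N. v i) = real N * a" using all by simp
    then have "a = 1 / real N" using sum1 N3 by (simp add: field_simps)
    then have "v = center N"
    proof -
      assume a1N: "a = 1 / real N"
      show ?thesis unfolding fun_eq_iff center_def
      proof
        fix i show "v i = (if i < N then 1 / real N else 0)"
          using all zero a1N by (cases "i < N") auto
      qed
    qed
    then show False using nc by simp
  qed
  define m where "m = real N - real k"
  have kk: "k + 2 \<le> N" using k1 k2 N3 by presburger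
  have m2: "m \<ge> 2" using kk unfolding m_def by linarith
  have kN: "k < N" using k1 k2 N3 by simp
  define PA where "PA = a powr \<alpha>"
  define PB where "PB = b powr \<alpha>"
  have PA0: "PA > 0" using a0 by (simp add: PA_def)
  have PB0: "PB > 0" using b0 by (simp add: PB_def)
  have S: "PS N \<alpha> v = real k * PA + m * PB"
  proof -
    have "PS N \<alpha> v = (\<Sum>l\<in>{0..<k}. v l powr \<alpha>) + (\<Sum>l\<in>{k..<N}. v l powr \<alpha>)"
      unfolding PS_def lessThan_atLeast0 using kN by (simp add: sum.atLeastLessThan_concat)
    also have "(\<Sum>l\<in>{0..<k}. v l powr \<alpha>) = (\<Sum>l\<in>{0..<k}. PA)"
      by (rule sum.cong) (auto simp: vA PA_def)
    also have "(\<Sum>l\<in>{k..<N}. v l powr \<alpha>) = (\<Sum>l\<in>{k..<N}. PB)"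
      by (rule sum.cong) (auto simp: vB PB_def)
    finally show ?thesis using kN by (simp add: m_def of_nat_diff)
  qed
  define ya where "ya = a powr (\<alpha> - 1)"
  define yb where "yb = b powr (\<alpha> - 1)"
  have ya0: "ya > 0" using a0 by (simp add: ya_def)
  have yb0: "yb > 0" using b0 by (simp add: yb_def)
  have PAy: "PA = a * ya" using a0 by (simp add: PA_def ya_def powr_mult_base)
  have PBy: "PB = b * yb" using b0 by (simp add: PB_def yb_def powr_mult_base)
  have HH: "ya * (PS N \<alpha> v - PA) = yb * (PS N \<alpha> v - PB)"
    using eq_H(1)[OF eq pos, of 0] eq_H(1)[OF eq pos, of "N - 1"] N3
    by (simp add: ya_def yb_def PA_def PB_def a_def b_def)
  define t where "t = b / a"
  define x where "x = t powr \<alpha>"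
  define y where "y = t powr (\<alpha> - 1)"
  have t0: "t > 0" using a0 b0 by (simp add: t_def)
  have t1: "t \<noteq> 1" using ab a0 by (simp add: t_def)
  have xP: "x = PB / PA" using a0 b0 by (simp add: x_def t_def PA_def PB_def powr_divide)
  have yP: "y = yb / ya" using a0 b0 by (simp add: y_def t_def ya_def yb_def powr_divide)
  have rel: "(real k - 1) + m * x = y * (real k + (m - 1) * x)"
  proof -
    have "((real k - 1) + m * x) * PA = (PS N \<alpha> v - PA)" unfolding xP S using PA0 by (simp add: field_simps)
    moreover have "(y * (real k + (m - 1) * x)) * PA = yb / ya * (PS N \<alpha> v - PB)"
      unfolding xP yP S using PA0 ya0 by (simp add: field_simps)
    moreover have "yb / ya * (PS N \<alpha> v - PB) = PS N \<alpha> v - PA"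
    proof -
      have "yb / ya * (PS N \<alpha> v - PB) = (yb * (PS N \<alpha> v - PB)) / ya" by simp
      also have "\<dots> = (ya * (PS N \<alpha> v - PA)) / ya" using HH by simp
      also have "\<dots> = PS N \<alpha> v - PA" using ya0 by simp
      finally show ?thesis .
    qed
    ultimately have "((real k - 1) + m * x) * PA = (y * (real k + (m - 1) * x)) * PA"
      by simp
    then show ?thesis using PA0 by simp
  qed
  have SB: "PS N \<alpha> v - PB = real k * PA + (m - 1) * PB" using S by (simp add: algebra_simps)
  have SA: "PS N \<alpha> v - PA = (real k - 1) * PA + m * PB" using S by (simp add: algebra_simps)
  have unst: "linearly_unstable N \<alpha> v"
  proof (cases "t < 1")
    case True
    have c1: "\<alpha> * (real k + (m - 2) * x) > real k + (m - 1) * x"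
      using claim1[OF t0 True a1 _ _ x_def y_def rel] k1 m2 by simp
    have c1': "\<alpha> * (real k * PA + (m - 2) * PB) > real k * PA + (m - 1) * PB"
    proof -
      have "(\<alpha> * (real k + (m - 2) * x)) * PA > (real k + (m - 1) * x) * PA"
        using mult_strict_right_mono[OF c1 PA0] .
      moreover have "PB = x * PA" using xP PA0 by simp
      ultimately show ?thesis by (simp add: algebra_simps)
    qed
    show ?thesis
    proof (rule diff_unstable[OF eq pos, of "N - 2" "N - 1"])
      show "N - 2 < N" "N - 1 < N" "N - 2 \<noteq> N - 1" using N3 by auto
      show "v (N - 2) = v (N - 1)" using vB[of "N - 2"] vB[of "N - 1"] k2 N3 by simp
      have v2: "v (N - 2) powr \<alpha> = PB" using vB[of "N - 2"] k2 N3 by (simp add: PB_def)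
      have g1: "real k * PA \<ge> 0" using PA0 by simp
      have g2: "(m - 1) * PB > 0" using m2 PB0 by simp
      show "PS N \<alpha> v - v (N - 2) powr \<alpha> > 0" unfolding v2 SB using g1 g2 by linarith
      show "\<alpha> * (PS N \<alpha> v - 2 * v (N - 2) powr \<alpha>) > PS N \<alpha> v - v (N - 2) powr \<alpha>"
        unfolding v2 using c1' S by (simp add: algebra_simps)
    qed
  next
    case False
    then have tg: "t > 1" using t1 by simp
    show ?thesis
    proof (cases "k \<ge> 2")
      case True
      have c2: "\<alpha> * (real k - 2 + m * x) > real k - 1 + m * x"
        using claim2[OF tg a1 _ _ x_def y_def rel] k1 m2 by simp
      have c2': "\<alpha> * ((real k - 2) * PA + m * PB) > (real k - 1) * PA + m * PB"
      proof -
        have "(\<alpha> * (real k - 2 + m * x)) * PA > (real k - 1 + m * x) * PA"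
          using mult_strict_right_mono[OF c2 PA0] .
        moreover have "PB = x * PA" using xP PA0 by simp
      ultimately show ?thesis by (simp add: algebra_simps)
      qed
      show ?thesis
      proof (rule diff_unstable[OF eq pos, of 0 1])
        show "0 < N" "1 < N" "(0::nat) \<noteq> 1" using N3 by auto
        show "v 0 = v 1" using vA[of 0] vA[of 1] True by simp
        have v2: "v 0 powr \<alpha> = PA" by (simp add: PA_def a_def)
        have g1: "(real k - 1) * PA \<ge> 0" using k1 PA0 by simp
        have g2: "m * PB > 0" using m2 PB0 by simp
        show "PS N \<alpha> v - v 0 powr \<alpha> > 0" unfolding v2 SA using g1 g2 by linarith
        show "\<alpha> * (PS N \<alpha> v - 2 * v 0 powr \<alpha>) > PS N \<alpha> v - v 0 powr \<alpha>"
          unfolding v2 using c2' S by (simp add: algebra_simps)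
      qed
    next
      case False
      then have k1': "k = 1" using k1 by simp
      have rel1: "m * x = y * (1 + (m - 1) * x)" using rel k1' by simp
      have c3: "(\<alpha> - 1) * (m - 1) * x > 1" using claim3[OF tg a1 m2 x_def y_def rel1] .
      have c3': "(\<alpha> - 1) * (m - 1) * PB > PA"
      proof -
        have "((\<alpha> - 1) * (m - 1) * x) * PA > 1 * PA" using mult_strict_right_mono[OF c3 PA0] by simp
        moreover have "PB = x * PA" using xP PA0 by simp
      ultimately show ?thesis by (simp add: algebra_simps)
      qed
      obtain n where Nn: "N = Suc n" using N3 by (cases N) auto
      have mn: "m = real n" using Nn k1' by (simp add: m_def)
      define z where "z = (\<lambda>l. if l = 0 then m else if l < N then -1 else (0::real))"
      define cA where "cA = \<alpha> / (PS N \<alpha> v - PA)"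
      define cB where "cB = \<alpha> / (PS N \<alpha> v - PB)"
      define \<mu> where "\<mu> = \<alpha> - 1 - \<alpha> * PA / (PA + (m - 1) * PB)"
      have vS: "\<And>l. l < n \<Longrightarrow> v (Suc l) = b" using vB Nn k1' by simp
      have sz: "(\<Sum>l<N. f l * z l) = f 0 * m - (\<Sum>l<n. f (Suc l))" for f
        unfolding Nn sum.lessThan_Suc_shift by (simp add: z_def Nn sum_negf)
      have s0: "(\<Sum>l<N. z l) = 0" using sz[of "\<lambda>_. 1"] mn by simp
      have s1: "(\<Sum>j<N. \<alpha> / (PS N \<alpha> v - v j powr \<alpha>) * z j) = cA * m - n * cB"
        using sz[of "\<lambda>j. \<alpha> / (PS N \<alpha> v - v j powr \<alpha>)"] vS
        by (simp add: cA_def cB_def a_def[symmetric] PA_def[symmetric] PB_def)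
      have SA1: "PS N \<alpha> v - PA = m * PB" using SA k1' by simp
      have SB1: "PS N \<alpha> v - PB = PA + (m - 1) * PB" using SB k1' by simp
      have g3: "(m - 1) * PB > 0" using m2 PB0 by simp
      have D1: "PA + (m - 1) * PB > 0" using PA0 g3 by linarith
      show ?thesis
      proof (rule unstable_of_real[where x = z and r = 0 and \<mu> = \<mu>])
        show "\<forall>i\<ge>N. z i = 0" using N3 by (auto simp: z_def)
        show "0 < N" using N3 by simp
        show "z 0 \<noteq> 0" using m2 by (simp add: z_def)
        show "(\<Sum>i<N. z i) = 0" by fact
        show "\<mu> > 0" using c3' D1 by (simp add: \<mu>_def field_simps)
        show "\<forall>i<N. (\<Sum>j<N. DFmat N \<alpha> v i j * z j) = \<mu> * z i"
        proof (intro allI impI)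
          fix i assume i: "i < N"
          have "(\<Sum>j<N. DFmat N \<alpha> v i j * z j) =
            (-1 + \<alpha> / (PS N \<alpha> v - v i powr \<alpha>) * (PS N \<alpha> v - 2 * v i powr \<alpha>)) * z i
            + v i powr \<alpha> * (cA * m - n * cB)"
            using DF_mult[OF eq pos i, of z] s0 s1 by simp
          also have "\<dots> = \<mu> * z i"
          proof (cases "i = 0")
            case True
            have v0: "v i powr \<alpha> = PA" using True by (simp add: PA_def a_def)
            have nz: "PS N \<alpha> v - PA \<noteq> 0" using SA1 m2 PB0 by simp
            have cAe: "\<alpha> / (PS N \<alpha> v - PA) * (PS N \<alpha> v - 2 * PA) = \<alpha> - PA * cA"
              unfolding cA_def by (rule aux_split[OF nz])
            have \<mu>e: "\<mu> = \<alpha> - 1 - PA * cB" by (simp add: \<mu>_def cB_def SB1)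
            have z0: "z i = m" using True by (simp add: z_def)
            have "(-1 + \<alpha> / (PS N \<alpha> v - v i powr \<alpha>) * (PS N \<alpha> v - 2 * v i powr \<alpha>)) * z i
              + v i powr \<alpha> * (cA * m - n * cB) = (-1 + (\<alpha> - PA * cA)) * m + PA * (cA * m - m * cB)"
              unfolding v0 cAe z0 mn by simp
            also have "\<dots> = (\<alpha> - 1 - PA * cB) * m" by (simp add: algebra_simps)
            finally show ?thesis unfolding \<mu>e z0 by simp
          next
            case False
            have vi: "v i = b" using False i vB k1' by simp
            have v0: "v i powr \<alpha> = PB" using vi by (simp add: PB_def)
            have nz: "PS N \<alpha> v - PB \<noteq> 0" using SB1 D1 by simp
            have cBe: "\<alpha> / (PS N \<alpha> v - PB) * (PS N \<alpha> v - 2 * PB) = \<alpha> - PB * cB"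
              unfolding cB_def by (rule aux_split[OF nz])
            have PBcA: "PB * cA * m = \<alpha>" using SA1 m2 PB0 by (simp add: cA_def)
            have DcB: "PA * cB + (m - 1) * PB * cB = \<alpha>"
            proof -
              have "PA * cB + (m - 1) * PB * cB = (PA + (m - 1) * PB) * cB" by (simp add: algebra_simps)
              also have "\<dots> = \<alpha>" using D1 by (simp add: cB_def SB1)
              finally show ?thesis .
            qed
            have zi: "z i = -1" using False i by (simp add: z_def)
            have mB: "(m - 1) * PB * cB = \<alpha> - PA * cB" using DcB by linarith
            have \<mu>e: "\<mu> = \<alpha> - 1 - PA * cB" by (simp add: \<mu>_def cB_def SB1)
            have "(-1 + \<alpha> / (PS N \<alpha> v - v i powr \<alpha>) * (PS N \<alpha> v - 2 * v i powr \<alpha>)) * z i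
              + v i powr \<alpha> * (cA * m - n * cB) = (-1 + (\<alpha> - PB * cB)) * (-1) + PB * cA * m - m * PB * cB"
              unfolding v0 cBe zi mn by (simp add: algebra_simps)
            also have "\<dots> = 1 - \<alpha> + PB * cB + PB * cA * m - ((m - 1) * PB * cB + PB * cB)"
              by (simp add: algebra_simps)
            also have "\<dots> = 1 - \<alpha> + PB * cB + \<alpha> - ((\<alpha> - PA * cB) + PB * cB)"
              unfolding PBcA mB by simp
            also have "\<dots> = 1 - \<alpha> + PA * cB" by simp
            also have "\<dots> = \<mu> * z i" unfolding zi \<mu>e by simp
            finally show ?thesis .
          qed
          finally show "(\<Sum>j<N. DFmat N \<alpha> v i j * z j) = \<mu> * z i" .
        qed
      qed
    qed
  qed
  have tl: "k = 1 \<and> \<alpha> \<ge> (real N - 1) / (real N - 2) \<Longrightarrow> tval N v < 1"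
  proof -
    assume h: "k = 1 \<and> \<alpha> \<ge> (real N - 1) / (real N - 2)"
    have am: "\<alpha> \<ge> m / (m - 1)" using h by (simp add: m_def)
    have rel1: "m * x = y * (1 + (m - 1) * x)" using rel h by simp
    have "\<not> t > 1" using claim4[OF _ am m2 x_def y_def rel1] by blast
    then have "t < 1" using t1 by simp
    then show "tval N v < 1" by (simp add: tval_def t_def a_def b_def)
  qed
  show ?thesis using unst tl by blast
qed



end
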